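(* For every integer $\ell\ge 3$, every $\varepsilon>0$ and every $0<\delta<1/\ell$ there exists $C>0$ such that for every $n$-vertex graph $G$ with minimum degree $\delta(G)\ge(\delta+\varepsilon)n$, if $p\ge C/n$ then asymptotically almost surely $G\cup G(n,p)$ contains $\delta n$ pairwise vertex-disjoint copies of $C_\ell$.
   Context: Here $\delta$ is a real constant, while $\delta(G)$ denotes the minimum degree of $G$. $C_\ell$ is the cycle on $\ell$ vertices. $G(n,p)$ is the binomial random graph on $V(G)$ (each pair an edge independently with probability $p$), and $G\cup G(n,p)$ has as edge set the union of both edge sets. "Asymptotically almost surely" means with probability tending to $1$ as $n\to\infty$, for any sequence $G=G_n$ satisfying the hypotheses. *)

theory Defs
  imports Complex_Main
begin

text \<open>Graphs on vertex set {0..<n}: edge sets of 2-element subsets.\<close>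
definition all_pairs :: "nat \<Rightarrow> nat set set" where
  "all_pairs n = {{u, v} | u v. u < v \<and> v < n}"

definition degree :: "nat set set \<Rightarrow> nat \<Rightarrow> nat" where
  "degree E u = card {v. {u, v} \<in> E \<and> v \<noteq> u}"

text \<open>Minimum degree (meaningful for n > 0).\<close>
definition min_degree :: "nat \<Rightarrow> nat set set \<Rightarrow> nat" where
  "min_degree n E = Min ((\<lambda>u. degree E u) ` {..<n})"

text \<open>E (on vertices {0..<n}) contains k pairwise vertex-disjoint copies of C_l:
  copy j is the cyclic vertex sequence f j 0, ..., f j (l-1); all vertices distinct.\<close>
definition has_disjoint_cycles :: "nat \<Rightarrow> nat set set \<Rightarrow> nat \<Rightarrow> nat \<Rightarrow> bool" where
  "has_disjoint_cycles n E l k \<longleftrightarrow>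
     (\<exists>f :: nat \<Rightarrow> nat \<Rightarrow> nat.
        (\<forall>j<k. \<forall>i<l. f j i < n) \<and>
        inj_on (\<lambda>(j, i). f j i) ({..<k} \<times> {..<l}) \<and>
        (\<forall>j<k. \<forall>i<l. {f j i, f j ((i + 1) mod l)} \<in> E))"

definition gnp_prob :: "nat \<Rightarrow> real \<Rightarrow> (nat set set \<Rightarrow> bool) \<Rightarrow> real" where
  "gnp_prob n p P =
     (\<Sum>H\<in>Pow (all_pairs n). if P H then p ^ card H * (1 - p) ^ (card (all_pairs n) - card H) else 0)"

end

theory Submission
  imports Defs
begin


lemma wsum:
  fixes p :: real
  assumes "finite T"
  shows "(\<Sum>H\<in>Pow T. p ^ card H * (1 - p) ^ (card T - card H)) = 1"
  using assms
proof (induction T rule: finite_induct)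
  case empty
  then show ?case by simp
next
  case (insert x F)
  have fin: "finite (Pow F)" using insert by simp
  have inj: "inj_on (insert x) (Pow F)" using insert.hyps(2)
    by (auto simp: inj_on_def)
  have disj: "Pow F \<inter> insert x ` Pow F = {}" using insert.hyps(2) by auto
  have "(\<Sum>H\<in>Pow (insert x F). p ^ card H * (1 - p) ^ (card (insert x F) - card H))
      = (\<Sum>H\<in>Pow F. p ^ card H * (1 - p) ^ (card (insert x F) - card H))
      + (\<Sum>H\<in>insert x ` Pow F. p ^ card H * (1 - p) ^ (card (insert x F) - card H))"
    unfolding Pow_insert by (rule sum.union_disjoint) (use fin disj in auto)
  also have "(\<Sum>H\<in>insert x ` Pow F. p ^ card H * (1 - p) ^ (card (insert x F) - card H))
      = (\<Sum>H\<in>Pow F. p ^ card (insert x H) * (1 - p) ^ (card (insert x F) - card (insert x H)))"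
    by (rule sum.reindex_cong[OF inj]) auto
  also have "\<dots> = (\<Sum>H\<in>Pow F. p * (p ^ card H * (1 - p) ^ (card F - card H)))"
  proof (rule sum.cong)
    fix H assume "H \<in> Pow F"
    then have "H \<subseteq> F" "x \<notin> H" "finite H" using insert finite_subset by auto
    then show "p ^ card (insert x H) * (1 - p) ^ (card (insert x F) - card (insert x H)) =
          p * (p ^ card H * (1 - p) ^ (card F - card H))"
      using insert by simp
  qed simp
  also have "(\<Sum>H\<in>Pow F. p ^ card H * (1 - p) ^ (card (insert x F) - card H))
      = (\<Sum>H\<in>Pow F. (1 - p) * (p ^ card H * (1 - p) ^ (card F - card H)))"
  proof (rule sum.cong)
    fix H assume "H \<in> Pow F"
    then have "H \<subseteq> F" "finite H" using insert finite_subset by auto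
    then have "card H \<le> card F" using insert card_mono by blast
    then have "card (insert x F) - card H = Suc (card F - card H)" using insert by simp
    then show "p ^ card H * (1 - p) ^ (card (insert x F) - card H) =
          (1 - p) * (p ^ card H * (1 - p) ^ (card F - card H))" by simp
  qed simp
  finally have "(\<Sum>H\<in>Pow (insert x F). p ^ card H * (1 - p) ^ (card (insert x F) - card H))
     = (1 - p) * (\<Sum>H\<in>Pow F. p ^ card H * (1 - p) ^ (card F - card H))
       + p * (\<Sum>H\<in>Pow F. p ^ card H * (1 - p) ^ (card F - card H))"
    by (simp only: sum_distrib_left)
  then show ?case using insert.IH by simp
qed

lemma finite_all_pairs: "finite (all_pairs n)"
proof -
  have "all_pairs n \<subseteq> Pow {..<n}" unfolding all_pairs_def by auto
  then show ?thesis by (rule finite_subset) simp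
qed

lemma gnp_total: "gnp_prob n p (\<lambda>H. True) = 1"
  unfolding gnp_prob_def using wsum[OF finite_all_pairs] by simp

lemma gnp_compl: "gnp_prob n p P + gnp_prob n p (\<lambda>H. \<not> P H) = 1"
proof -
  have "gnp_prob n p P + gnp_prob n p (\<lambda>H. \<not> P H) = gnp_prob n p (\<lambda>H. True)"
    unfolding gnp_prob_def sum.distrib[symmetric] by (rule sum.cong) auto
  then show ?thesis using gnp_total by simp
qed

lemma weight_nonneg: "0 \<le> p \<Longrightarrow> p \<le> 1 \<Longrightarrow> 0 \<le> (p::real) ^ a * (1 - p) ^ b"
  by simp

lemma gnp_mono:
  assumes "0 \<le> p" "p \<le> 1" "\<And>H. P H \<Longrightarrow> Q H"
  shows "gnp_prob n p P \<le> gnp_prob n p Q"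
  unfolding gnp_prob_def by (rule sum_mono) (use assms in auto)

lemma gnp_false: "gnp_prob n p (\<lambda>H. False) = 0"
  unfolding gnp_prob_def by simp

lemma gnp_union:
  assumes "0 \<le> p" "p \<le> 1" "finite I"
  shows "gnp_prob n p (\<lambda>H. \<exists>i\<in>I. P i H) \<le> (\<Sum>i\<in>I. gnp_prob n p (P i))"
proof -
  have "gnp_prob n p (\<lambda>H. \<exists>i\<in>I. P i H) \<le>
     (\<Sum>H\<in>Pow (all_pairs n). \<Sum>i\<in>I. if P i H then p ^ card H * (1 - p) ^ (card (all_pairs n) - card H) else 0)"
    unfolding gnp_prob_def
  proof (rule sum_mono)
    fix H
    show "(if \<exists>i\<in>I. P i H then p ^ card H * (1 - p) ^ (card (all_pairs n) - card H) else 0)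
      \<le> (\<Sum>i\<in>I. if P i H then p ^ card H * (1 - p) ^ (card (all_pairs n) - card H) else 0)"
    proof (cases "\<exists>i\<in>I. P i H")
      case True
      then obtain i where i: "i \<in> I" "P i H" by blast
      have "(if P i H then p ^ card H * (1 - p) ^ (card (all_pairs n) - card H) else 0)
        \<le> (\<Sum>i\<in>I. if P i H then p ^ card H * (1 - p) ^ (card (all_pairs n) - card H) else 0)"
        by (rule member_le_sum) (use i assms in auto)
      then show ?thesis using True i by simp
    next
      case False
      then show ?thesis using assms by (auto intro: sum_nonneg)
    qed
  qed
  also have "\<dots> = (\<Sum>i\<in>I. gnp_prob n p (P i))"
    unfolding gnp_prob_def by (rule sum.swap)
  finally show ?thesis .
qed

lemma gnp_avoid:
  assumes "S \<subseteq> all_pairs n"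
  shows "gnp_prob n p (\<lambda>H. H \<inter> S = {}) = (1 - p) ^ card S"
proof -
  let ?A = "all_pairs n"
  have finA: "finite ?A" by (rule finite_all_pairs)
  have finS: "finite S" using assms finA finite_subset by blast
  have "gnp_prob n p (\<lambda>H. H \<inter> S = {}) = (\<Sum>H\<in>{H\<in>Pow ?A. H \<inter> S = {}}. p ^ card H * (1 - p) ^ (card ?A - card H))"
    unfolding gnp_prob_def by (rule sum.inter_filter[symmetric]) (use finA in simp)
  also have "{H\<in>Pow ?A. H \<inter> S = {}} = Pow (?A - S)" by auto
  also have "(\<Sum>H\<in>Pow (?A - S). p ^ card H * (1 - p) ^ (card ?A - card H))
     = (\<Sum>H\<in>Pow (?A - S). (1 - p) ^ card S * (p ^ card H * (1 - p) ^ (card (?A - S) - card H)))"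
  proof (rule sum.cong)
    fix H assume "H \<in> Pow (?A - S)"
    then have H: "H \<subseteq> ?A - S" by auto
    have cAS: "card (?A - S) = card ?A - card S" using assms finS by (simp add: card_Diff_subset)
    have "card S \<le> card ?A" using assms finA card_mono by blast
    moreover have "card H \<le> card (?A - S)" using H finA by (simp add: card_mono)
    ultimately have "card ?A - card H = card S + (card (?A - S) - card H)" using cAS by simp
    then show "p ^ card H * (1 - p) ^ (card ?A - card H) =
        (1 - p) ^ card S * (p ^ card H * (1 - p) ^ (card (?A - S) - card H))"
      by (simp add: power_add)
  qed simp
  also have "\<dots> = (1 - p) ^ card S"
    using wsum[of "?A - S" p] finA by (simp add: sum_distrib_left[symmetric])
  finally show ?thesis .
qed

definition expansion :: "nat \<Rightarrow> nat set set \<Rightarrow> nat \<Rightarrow> bool" where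
  "expansion n H b \<longleftrightarrow> (\<forall>X Y. X \<subseteq> {..<n} \<longrightarrow> Y \<subseteq> {..<n} \<longrightarrow> X \<inter> Y = {} \<longrightarrow>
      b \<le> card X \<longrightarrow> b \<le> card Y \<longrightarrow> (\<exists>x\<in>X. \<exists>y\<in>Y. {x, y} \<in> H))"

lemma pair_in_all_pairs: "x < n \<Longrightarrow> y < n \<Longrightarrow> x \<noteq> y \<Longrightarrow> {x, y} \<in> all_pairs n"
  unfolding all_pairs_def
proof -
  assume a: "x < n" "y < n" "x \<noteq> y"
  show "{x, y} \<in> {{u, v} |u v. u < v \<and> v < n}"
  proof (cases "x < y")
    case True then show ?thesis using a by blast
  next
    case False then have "y < x" using a by simp
    then show ?thesis using a by (auto simp: insert_commute)
  qed
qed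

lemma not_expansion_prob:
  fixes p :: real
  assumes p: "0 \<le> p" "p \<le> 1"
  shows "gnp_prob n p (\<lambda>H. \<not> expansion n H b) \<le> 4 ^ n * (1 - p) ^ (b * b)"
proof -
  define cross :: "nat set \<Rightarrow> nat set \<Rightarrow> nat set set" where
    "cross X Y = (\<lambda>(x, y). {x, y}) ` (X \<times> Y)" for X Y
  define Q where "Q XY H \<longleftrightarrow> fst XY \<inter> snd XY = {} \<and> card (fst XY) = b \<and> card (snd XY) = b \<and>
     fst XY \<subseteq> {..<n} \<and> snd XY \<subseteq> {..<n} \<and> H \<inter> cross (fst XY) (snd XY) = {}" for XY H
  let ?I = "Pow {..<n} \<times> Pow {..<n}"
  have fin: "finite ?I" by simp
  have "gnp_prob n p (\<lambda>H. \<not> expansion n H b) \<le> gnp_prob n p (\<lambda>H. \<exists>XY\<in>?I. Q XY H)"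
  proof (rule gnp_mono[OF p])
    fix H assume "\<not> expansion n H b"
    then obtain X Y where XY: "X \<subseteq> {..<n}" "Y \<subseteq> {..<n}" "X \<inter> Y = {}" "b \<le> card X" "b \<le> card Y"
      and no: "\<And>x y. x \<in> X \<Longrightarrow> y \<in> Y \<Longrightarrow> {x, y} \<notin> H"
      unfolding expansion_def by blast
    obtain X' where X': "X' \<subseteq> X" "card X' = b" using obtain_subset_with_card_n[OF XY(4)] by blast
    obtain Y' where Y': "Y' \<subseteq> Y" "card Y' = b" using obtain_subset_with_card_n[OF XY(5)] by blast
    have "Q (X', Y') H" unfolding Q_def cross_def using X' Y' XY no by fastforce
    moreover have "(X', Y') \<in> ?I" using X' Y' XY by auto
    ultimately show "\<exists>XY\<in>?I. Q XY H" by blast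
  qed
  also have "\<dots> \<le> (\<Sum>XY\<in>?I. gnp_prob n p (Q XY))" by (rule gnp_union[OF p fin])
  also have "\<dots> \<le> (\<Sum>XY\<in>?I. (1 - p) ^ (b * b))"
  proof (rule sum_mono)
    fix XY assume "XY \<in> ?I"
    show "gnp_prob n p (Q XY) \<le> (1 - p) ^ (b * b)"
    proof (cases "fst XY \<inter> snd XY = {} \<and> card (fst XY) = b \<and> card (snd XY) = b \<and>
     fst XY \<subseteq> {..<n} \<and> snd XY \<subseteq> {..<n}")
      case True
      let ?S = "cross (fst XY) (snd XY)"
      have inj: "inj_on (\<lambda>(x, y). {x, y}) (fst XY \<times> snd XY)"
        using True unfolding inj_on_def by (auto simp: doubleton_eq_iff)
      have cS: "card ?S = b * b" unfolding cross_def using True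
        by (simp add: card_image[OF inj] card_cartesian_product)
      have sub: "?S \<subseteq> all_pairs n" unfolding cross_def using True
        by (auto intro!: pair_in_all_pairs)
      have "gnp_prob n p (Q XY) \<le> gnp_prob n p (\<lambda>H. H \<inter> ?S = {})"
        by (rule gnp_mono[OF p]) (simp add: Q_def)
      also have "\<dots> = (1 - p) ^ (b * b)" using gnp_avoid[OF sub] cS by simp
      finally show ?thesis .
    next
      case False
      have "gnp_prob n p (Q XY) \<le> gnp_prob n p (\<lambda>H. False)"
        by (rule gnp_mono[OF p]) (use False in \<open>simp add: Q_def\<close>)
      moreover have "0 \<le> (1 - p) ^ (b * b)" using p by simp
      ultimately show ?thesis using gnp_false[of n p] by linarith
    qed
  qed
  also have "\<dots> = 4 ^ n * (1 - p) ^ (b * b)"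
    by (simp add: card_cartesian_product card_Pow power_mult_distrib[symmetric])
  finally show ?thesis .
qed



definition nbr :: "nat set set \<Rightarrow> nat \<Rightarrow> nat set" where
  "nbr E u = {v. {u, v} \<in> E \<and> v \<noteq> u}"

lemma degree_nbr: "degree E u = card (nbr E u)"
  unfolding degree_def nbr_def by simp

lemma split_sets:
  assumes "finite A" "m * s \<le> card A"
  shows "\<exists>X. (\<forall>i<m. X i \<subseteq> A \<and> card (X i) = s) \<and> (\<forall>i<m. \<forall>j<m. i \<noteq> j \<longrightarrow> X i \<inter> X j = {})"
  using assms
proof (induction m arbitrary: A)
  case 0
  then show ?case by simp
next
  case (Suc m)
  have "s \<le> card A" using Suc.prems by simp
  then obtain B where B: "B \<subseteq> A" "card B = s" using obtain_subset_with_card_n by metis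
  have fB: "finite B" using B Suc.prems finite_subset by blast
  have "card (A - B) = card A - s" using B Suc.prems by (simp add: card_Diff_subset fB)
  then have "m * s \<le> card (A - B)" using Suc.prems by simp
  then obtain X where X: "\<forall>i<m. X i \<subseteq> A - B \<and> card (X i) = s"
     "\<forall>i<m. \<forall>j<m. i \<noteq> j \<longrightarrow> X i \<inter> X j = {}"
    using Suc.IH[of "A - B"] Suc.prems by auto
  let ?X = "X(m := B)"
  have "\<forall>i<Suc m. ?X i \<subseteq> A \<and> card (?X i) = s"
  proof (intro allI impI)
    fix i assume "i < Suc m"
    show "?X i \<subseteq> A \<and> card (?X i) = s"
    proof (cases "i = m")
      case True then show ?thesis using B by simp
    next
      case False then have "i < m" using \<open>i < Suc m\<close> by simp
      then show ?thesis using X(1) False by auto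
    qed
  qed
  moreover have "\<forall>i<Suc m. \<forall>j<Suc m. i \<noteq> j \<longrightarrow> ?X i \<inter> ?X j = {}"
  proof (intro allI impI)
    fix i j assume "i < Suc m" "j < Suc m" "i \<noteq> j"
    then show "?X i \<inter> ?X j = {}"
    proof (cases "i = m")
      case True
      then have "j < m" using \<open>i \<noteq> j\<close> \<open>j < Suc m\<close> by simp
      then have "X j \<subseteq> A - B" using X(1) by blast
      then show ?thesis using True \<open>i \<noteq> j\<close> by auto
    next
      case False
      then have im: "i < m" using \<open>i < Suc m\<close> by simp
      then have Xi: "X i \<subseteq> A - B" using X(1) by blast
      show ?thesis
      proof (cases "j = m")
        case True then show ?thesis using Xi False by auto
      next
        case False
        then have "j < m" using \<open>j < Suc m\<close> by simp
        then show ?thesis using X(2) im \<open>i \<noteq> j\<close> \<open>i \<noteq> m\<close> False by simp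
      qed
    qed
  qed
  ultimately show ?case by blast
qed

lemma path_lemma:
  assumes exp: "expansion n H b" and b: "1 \<le> b"
  shows "(\<forall>i<Suc k. X i \<subseteq> {..<n} \<and> Suc k * b \<le> card (X i)) \<Longrightarrow>
         (\<forall>i<Suc k. \<forall>j<Suc k. i \<noteq> j \<longrightarrow> X i \<inter> X j = {}) \<Longrightarrow>
         \<exists>x. (\<forall>i<Suc k. x i \<in> X i) \<and> (\<forall>i<k. {x i, x (Suc i)} \<in> H)"
proof (induction k arbitrary: X)
  case 0
  then have "card (X 0) \<ge> 1" using b by simp
  then have "X 0 \<noteq> {}" by auto
  then obtain x where "x \<in> X 0" by blast
  then show ?case by (intro exI[of _ "\<lambda>_. x"]) simp
next
  case (Suc k)
  define Y0 where "Y0 = {y\<in>X 1. \<exists>x\<in>X 0. {x, y} \<in> H}"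
  define Y where "Y i = (if i = 0 then Y0 else X (Suc i))" for i
  have X1: "X 1 \<subseteq> {..<n}" "Suc (Suc k) * b \<le> card (X 1)" using Suc.prems(1) by auto
  have X0: "X 0 \<subseteq> {..<n}" "Suc (Suc k) * b \<le> card (X 0)" using Suc.prems(1) by auto
  have fX1: "finite (X 1)" using X1 finite_subset by blast
  have disj01: "X 1 \<inter> X 0 = {}" using Suc.prems(2)[rule_format, of 1 0] by simp
  have cB: "card (X 1 - Y0) < b"
  proof (rule ccontr)
    assume "\<not> card (X 1 - Y0) < b"
    then have "b \<le> card (X 1 - Y0)" by simp
    moreover have "b \<le> card (X 0)" using X0 by (metis le_add1 mult_Suc order_trans)
    moreover have "X 1 - Y0 \<subseteq> {..<n}" using X1 by auto
    moreover have "(X 1 - Y0) \<inter> X 0 = {}" using disj01 by auto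
    ultimately have "\<exists>x\<in>X 1 - Y0. \<exists>y\<in>X 0. {x, y} \<in> H"
      using exp[unfolded expansion_def, rule_format, of "X 1 - Y0" "X 0"] X0(1) by blast
    then obtain x y where "x \<in> X 1 - Y0" "y \<in> X 0" "{x, y} \<in> H" by blast
    then show False unfolding Y0_def by (auto simp: insert_commute)
  qed
  have "Y0 \<subseteq> X 1" unfolding Y0_def by auto
  then have "card (X 1) = card Y0 + card (X 1 - Y0)"
    using fX1 by (metis card_Diff_subset card_mono finite_subset le_add_diff_inverse)
  then have cY0: "Suc k * b \<le> card Y0" using X1 cB by simp
  have "\<forall>i<Suc k. Y i \<subseteq> {..<n} \<and> Suc k * b \<le> card (Y i)"
  proof (intro allI impI)
    fix i assume i: "i < Suc k"
    show "Y i \<subseteq> {..<n} \<and> Suc k * b \<le> card (Y i)"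
    proof (cases "i = 0")
      case True then show ?thesis using cY0 \<open>Y0 \<subseteq> X 1\<close> X1 Y_def by auto
    next
      case False
      then have "X (Suc i) \<subseteq> {..<n} \<and> Suc (Suc k) * b \<le> card (X (Suc i))" using Suc.prems(1) i by auto
      then show ?thesis using False Y_def by (auto intro: order_trans)
    qed
  qed
  moreover have "\<forall>i<Suc k. \<forall>j<Suc k. i \<noteq> j \<longrightarrow> Y i \<inter> Y j = {}"
  proof (intro allI impI)
    fix i j assume ij: "i < Suc k" "j < Suc k" "i \<noteq> j"
    have "X (Suc i) \<inter> X (Suc j) = {}" using Suc.prems(2) ij by auto
    then show "Y i \<inter> Y j = {}" unfolding Y_def using \<open>Y0 \<subseteq> X 1\<close> by auto
  qed
  ultimately obtain y where y: "\<forall>i<Suc k. y i \<in> Y i" "\<forall>i<k. {y i, y (Suc i)} \<in> H"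
    using Suc.IH by blast
  have "y 0 \<in> Y0" using y Y_def by auto
  then obtain x0 where x0: "x0 \<in> X 0" "{x0, y 0} \<in> H" unfolding Y0_def by blast
  define x where "x i = (case i of 0 \<Rightarrow> x0 | Suc j \<Rightarrow> y j)" for i
  have "\<forall>i<Suc (Suc k). x i \<in> X i"
  proof (intro allI impI)
    fix i assume i: "i < Suc (Suc k)"
    show "x i \<in> X i"
    proof (cases i)
      case 0 then show ?thesis using x0 x_def by simp
    next
      case (Suc j)
      then have "y j \<in> Y j" using y i by auto
      then show ?thesis using Suc x_def Y_def \<open>Y0 \<subseteq> X 1\<close> by (cases "j = 0") auto
    qed
  qed
  moreover have "\<forall>i<Suc k. {x i, x (Suc i)} \<in> H"
  proof (intro allI impI)
    fix i assume i: "i < Suc k"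
    show "{x i, x (Suc i)} \<in> H"
      using x0 y i x_def by (cases i) auto
  qed
  ultimately show ?case by blast
qed

lemma cycle_lemma:
  assumes l: "3 \<le> l" and exp: "expansion n H b" and b: "1 \<le> b"
    and W: "W \<subseteq> {..<n}" "h \<notin> W" "h < n"
    and cN: "2 * (l - 1) * b \<le> card (nbr G h \<inter> W)" and cW: "(l - 1) * (l - 1) * b \<le> card W"
  shows "\<exists>c. c 0 = h \<and> (\<forall>i\<in>{1..<l}. c i \<in> W) \<and> inj_on c {..<l} \<and>
              (\<forall>i<l. {c i, c ((i + 1) mod l)} \<in> G \<union> H)"
proof -
  define L where "L = l - 1"
  have L2: "2 \<le> L" and lL: "l = Suc L" using l L_def by auto
  have fW: "finite W" using W finite_subset by blast
  have fA: "finite (nbr G h \<inter> W)" using fW by simp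
  obtain E :: "nat \<Rightarrow> nat set" where E: "\<forall>i<2. E i \<subseteq> nbr G h \<inter> W \<and> card (E i) = L * b"
     "\<forall>i<2. \<forall>j<2. i \<noteq> j \<longrightarrow> E i \<inter> E j = {}"
    using split_sets[OF fA, of 2 "L * b"] cN L_def by (auto simp: mult.assoc)
  have E0: "E 0 \<subseteq> nbr G h \<inter> W" "card (E 0) = L * b" using E(1) by auto
  have E1: "E 1 \<subseteq> nbr G h \<inter> W" "card (E 1) = L * b" using E(1) by auto
  have E01: "E 0 \<inter> E 1 = {}" using E(2)[rule_format, of 0 1] by simp
  have fE: "finite (E 0)" "finite (E 1)" using E0 E1 fW finite_subset by blast+
  define W' where "W' = W - (E 0 \<union> E 1)"
  have cE: "card (E 0 \<union> E 1) = 2 * L * b" using E01 E0 E1 fE by (simp add: card_Un_disjoint)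
  have sub: "E 0 \<union> E 1 \<subseteq> W" using E0 E1 by auto
  have "card W' = card W - 2 * L * b" unfolding W'_def
    using card_Diff_subset[OF _ sub] fE cE by simp
  moreover have "(L - 2) * (L * b) = L * L * b - 2 * L * b" by (simp add: diff_mult_distrib)
  moreover have "L * L * b \<le> card W" using cW L_def by simp
  ultimately have cW': "(L - 2) * (L * b) \<le> card W'" by (metis diff_le_mono)
  have fW': "finite W'" unfolding W'_def using fW by simp
  obtain M where M: "\<forall>i<L - 2. M i \<subseteq> W' \<and> card (M i) = L * b"
     "\<forall>i<L - 2. \<forall>j<L - 2. i \<noteq> j \<longrightarrow> M i \<inter> M j = {}"
    using split_sets[OF fW' cW'] by blast
  define X where "X i = (if i = 0 then E 0 else if i = L - 1 then E 1 else M (i - 1))" for i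
  have XW: "X i \<subseteq> W \<and> card (X i) = L * b" if "i < L" for i
  proof -
    have "i = 0 \<or> i = L - 1 \<or> (0 < i \<and> i < L - 1)" using that by auto
    then show ?thesis
    proof (elim disjE)
      assume "i = 0" then show ?thesis using E0 X_def by auto
    next
      assume "i = L - 1" then show ?thesis using E1 X_def L2 by auto
    next
      assume i: "0 < i \<and> i < L - 1"
      then have "i - 1 < L - 2" by arith
      then have "M (i - 1) \<subseteq> W' \<and> card (M (i - 1)) = L * b" using M(1) by blast
      then show ?thesis using i X_def W'_def by auto
    qed
  qed
  have Xdisj: "X i \<inter> X j = {}" if "i < L" "j < L" "i \<noteq> j" for i j
  proof -
    have Mi: "M (i - 1) \<subseteq> W'" if "0 < i" "i < L - 1" for i
    proof -
      have "i - 1 < L - 2" using that by arith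
      then show ?thesis using M(1) by blast
    qed
    have cases: "\<And>i. i < L \<Longrightarrow> i = 0 \<or> i = L - 1 \<or> (0 < i \<and> i < L - 1)" by auto
    show ?thesis
      using cases[OF that(1)] cases[OF that(2)]
    proof (elim disjE)
      assume "i = 0" "j = 0" then show ?thesis using that by simp
    next
      assume "i = 0" "j = L - 1" then show ?thesis using E01 X_def L2 by auto
    next
      assume a: "i = 0" "0 < j \<and> j < L - 1"
      then show ?thesis using Mi[of j] X_def W'_def by auto
    next
      assume "i = L - 1" "j = 0" then show ?thesis using E01 X_def L2 by auto
    next
      assume "i = L - 1" "j = L - 1" then show ?thesis using that by simp
    next
      assume a: "i = L - 1" "0 < j \<and> j < L - 1"
      then show ?thesis using Mi[of j] X_def W'_def by auto
    next
      assume a: "0 < i \<and> i < L - 1" "j = 0"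
      then show ?thesis using Mi[of i] X_def W'_def by auto
    next
      assume a: "0 < i \<and> i < L - 1" "j = L - 1"
      then show ?thesis using Mi[of i] X_def W'_def by auto
    next
      assume a: "0 < i \<and> i < L - 1" "0 < j \<and> j < L - 1"
      then have "i - 1 < L - 2" "j - 1 < L - 2" "i - 1 \<noteq> j - 1" using that(3) by arith+
      then have "M (i - 1) \<inter> M (j - 1) = {}" using M(2) by blast
      then show ?thesis using a X_def by auto
    qed
  qed
  have LS: "L = Suc (L - 1)" using L2 by simp
  have "\<exists>x. (\<forall>i<Suc (L - 1). x i \<in> X i) \<and> (\<forall>i<L - 1. {x i, x (Suc i)} \<in> H)"
  proof (rule path_lemma[OF exp b])
    show "\<forall>i<Suc (L - 1). X i \<subseteq> {..<n} \<and> Suc (L - 1) * b \<le> card (X i)"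
      using XW W(1) LS by (metis order_refl order_trans)
    show "\<forall>i<Suc (L - 1). \<forall>j<Suc (L - 1). i \<noteq> j \<longrightarrow> X i \<inter> X j = {}"
      using Xdisj LS by metis
  qed
  then obtain x where x: "\<forall>i<L. x i \<in> X i" "\<forall>i<L - 1. {x i, x (Suc i)} \<in> H"
    using LS by metis
  define c where "c i = (if i = 0 then h else x (i - 1))" for i
  have cW: "c i \<in> W" if "i \<in> {1..<l}" for i
  proof -
    have "i - 1 < L" using that lL by auto
    then show ?thesis using x(1) XW c_def that by auto
  qed
  have inj: "inj_on c {..<l}"
  proof (rule inj_onI)
    fix i j assume ij: "i \<in> {..<l}" "j \<in> {..<l}" "c i = c j"
    show "i = j"
    proof (rule ccontr)
      assume ne: "i \<noteq> j"
      show False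
      proof (cases "i = 0 \<or> j = 0")
        case True
        then show False using ij ne cW[of i] cW[of j] W(2) c_def by (auto simp: atLeastLessThan_iff)
      next
        case False
        then have m: "i - 1 \<noteq> j - 1" "i - 1 < L" "j - 1 < L" using ij ne lL by auto
        then have "x (i - 1) \<in> X (i - 1)" "x (j - 1) \<in> X (j - 1)" using x(1) by auto
        moreover have "x (i - 1) = x (j - 1)" using ij False c_def by simp
        moreover have "X (i - 1) \<inter> X (j - 1) = {}" using Xdisj[OF m(2) m(3) m(1)] .
        ultimately show False by auto
      qed
    qed
  qed
  have nb: "{h, y} \<in> G" if "y \<in> nbr G h" for y using that nbr_def by auto
  have edges: "{c i, c ((i + 1) mod l)} \<in> G \<union> H" if i: "i < l" for i
  proof -
    have "i = 0 \<or> i = L \<or> (0 < i \<and> i < L)" using i lL by auto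
    then show ?thesis
    proof (elim disjE)
      assume i0: "i = 0"
      have "(i + 1) mod l = 1" using i0 l by simp
      moreover have "x 0 \<in> E 0" using x(1)[rule_format, of 0] X_def L2 by simp
      ultimately show ?thesis using i0 c_def E0 nb by auto
    next
      assume iL: "i = L"
      have "(i + 1) mod l = 0" using iL lL by simp
      moreover have "x (L - 1) \<in> E 1" using x(1)[rule_format, of "L - 1"] X_def L2 by auto
      moreover have "{h, x (L - 1)} \<in> G" using nb E1(1) \<open>x (L - 1) \<in> E 1\<close> by blast
      ultimately show ?thesis using iL c_def L2 by (auto simp: insert_commute)
    next
      assume a: "0 < i \<and> i < L"
      then have "(i + 1) mod l = i + 1" using lL by simp
      moreover have "{x (i - 1), x (Suc (i - 1))} \<in> H"
        using x(2)[rule_format, of "i - 1"] a by arith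
      ultimately show ?thesis using a c_def by auto
    qed
  qed
  show ?thesis using cW inj edges c_def by (intro exI[of _ c]) auto
qed



definition valid :: "nat \<Rightarrow> nat set set \<Rightarrow> nat \<Rightarrow> nat \<Rightarrow> (nat \<Rightarrow> nat \<Rightarrow> nat) \<Rightarrow> bool" where
  "valid n E l k f \<longleftrightarrow> (\<forall>j<k. \<forall>i<l. f j i < n) \<and>
        inj_on (\<lambda>(j, i). f j i) ({..<k} \<times> {..<l}) \<and>
        (\<forall>j<k. \<forall>i<l. {f j i, f j ((i + 1) mod l)} \<in> E)"

lemma hdc_valid: "has_disjoint_cycles n E l k \<longleftrightarrow> (\<exists>f. valid n E l k f)"
  unfolding has_disjoint_cycles_def valid_def by simp

lemma valid_extend:
  assumes v: "valid n E l k f" and c: "\<forall>i<l. c i < n" "inj_on c {..<l}"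
    "\<forall>i<l. {c i, c ((i + 1) mod l)} \<in> E"
    and d: "\<forall>i<l. \<forall>j<k. \<forall>i'<l. c i \<noteq> f j i'"
  shows "valid n E l (Suc k) (f(k := c))"
proof -
  have "inj_on (\<lambda>(j, i). (f(k := c)) j i) ({..<Suc k} \<times> {..<l})"
  proof (rule inj_onI, clarify)
    fix j i j' i' assume a: "j < Suc k" "i < l" "j' < Suc k" "i' < l"
      "(f(k := c)) j i = (f(k := c)) j' i'"
    show "j = j' \<and> i = i'"
    proof (cases "j = k"; cases "j' = k")
      assume "j = k" "j' = k" then show ?thesis using a c(2) by (auto dest: inj_onD)
    next
      assume "j = k" "j' \<noteq> k"
      then have "c i = f j' i'" "j' < k" using a by simp_all
      then show ?thesis using d a by blast
    next
      assume "j \<noteq> k" "j' = k"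
      then have "c i' = f j i" "j < k" using a by simp_all
      then show ?thesis using d a by blast
    next
      assume "j \<noteq> k" "j' \<noteq> k"
      then have jj: "j < k" "j' < k" using a by auto
      have inj: "inj_on (\<lambda>(j, i). f j i) ({..<k} \<times> {..<l})" using v unfolding valid_def by simp
      have "f j i = f j' i'" using a \<open>j \<noteq> k\<close> \<open>j' \<noteq> k\<close> by simp
      then have "(j, i) = (j', i')" using inj_onD[OF inj, of "(j, i)" "(j', i')"] jj a by simp
      then show ?thesis by simp
    qed
  qed
  moreover have "\<forall>j<Suc k. \<forall>i<l. (f(k := c)) j i < n"
    using v c unfolding valid_def by (auto simp: less_Suc_eq)
  moreover have "\<forall>j<Suc k. \<forall>i<l. {(f(k := c)) j i, (f(k := c)) j ((i + 1) mod l)} \<in> E"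
    using v c unfolding valid_def by (auto simp: less_Suc_eq)
  ultimately show ?thesis unfolding valid_def by blast
qed

lemma valid_replace:
  assumes v: "valid n E l k f" and j0: "j0 < k" and c: "\<forall>i<l. c i < n" "inj_on c {..<l}"
    "\<forall>i<l. {c i, c ((i + 1) mod l)} \<in> E"
    and d: "\<forall>i<l. \<forall>j<k. j \<noteq> j0 \<longrightarrow> (\<forall>i'<l. c i \<noteq> f j i')"
  shows "valid n E l k (f(j0 := c))"
proof -
  have "inj_on (\<lambda>(j, i). (f(j0 := c)) j i) ({..<k} \<times> {..<l})"
  proof (rule inj_onI, clarify)
    fix j i j' i' assume a: "j < k" "i < l" "j' < k" "i' < l"
      "(f(j0 := c)) j i = (f(j0 := c)) j' i'"
    show "j = j' \<and> i = i'"
    proof (cases "j = j0"; cases "j' = j0")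
      assume "j = j0" "j' = j0" then show ?thesis using a c(2) by (auto dest: inj_onD)
    next
      assume "j = j0" "j' \<noteq> j0"
      then have "c i = f j' i'" using a by simp
      then show ?thesis using d a \<open>j' \<noteq> j0\<close> by blast
    next
      assume "j \<noteq> j0" "j' = j0"
      then have "c i' = f j i" using a by simp
      then show ?thesis using d a \<open>j \<noteq> j0\<close> by blast
    next
      assume "j \<noteq> j0" "j' \<noteq> j0"
      have inj: "inj_on (\<lambda>(j, i). f j i) ({..<k} \<times> {..<l})" using v unfolding valid_def by simp
      have "f j i = f j' i'" using a \<open>j \<noteq> j0\<close> \<open>j' \<noteq> j0\<close> by simp
      then have "(j, i) = (j', i')" using inj_onD[OF inj, of "(j, i)" "(j', i')"] a by simp
      then show ?thesis by simp
    qed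
  qed
  moreover have "\<forall>j<k. \<forall>i<l. (f(j0 := c)) j i < n"
    using v c unfolding valid_def by auto
  moreover have "\<forall>j<k. \<forall>i<l. {(f(j0 := c)) j i, (f(j0 := c)) j ((i + 1) mod l)} \<in> E"
    using v c unfolding valid_def by auto
  ultimately show ?thesis unfolding valid_def by blast
qed

lemma sum_one_big:
  fixes g :: "nat \<Rightarrow> real"
  assumes "\<forall>i<l. 0 \<le> g i \<and> g i \<le> A" "\<forall>i1<l. \<forall>i2<l. B \<le> g i1 \<and> B \<le> g i2 \<longrightarrow> i1 = i2"
    "0 \<le> B" "0 \<le> A"
  shows "(\<Sum>i<l. g i) \<le> A + real l * B"
proof (cases "\<exists>i0<l. B \<le> g i0")
  case True
  then obtain i0 where i0: "i0 < l" "B \<le> g i0" by blast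
  have "(\<Sum>i<l. g i) = g i0 + (\<Sum>i\<in>{..<l} - {i0}. g i)"
    using i0 by (simp add: sum.remove)
  also have "(\<Sum>i\<in>{..<l} - {i0}. g i) \<le> real (card ({..<l} - {i0})) * B"
  proof (rule sum_bounded_above)
    fix i assume "i \<in> {..<l} - {i0}"
    then have "i < l" "i \<noteq> i0" by auto
    show "g i \<le> B"
    proof (rule ccontr)
      assume "\<not> g i \<le> B"
      then have "B \<le> g i" by simp
      then have "i = i0" using assms(2)[rule_format, of i i0] i0 \<open>i < l\<close> by simp
      then show False using \<open>i \<noteq> i0\<close> by simp
    qed
  qed
  also have "real (card ({..<l} - {i0})) * B \<le> real l * B"
  proof -
    have "card ({..<l} - {i0}) \<le> card {..<l}" by (rule card_mono) auto
    then show ?thesis using assms(3) by (intro mult_right_mono) auto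
  qed
  finally have "(\<Sum>i<l. g i) \<le> g i0 + real l * B" by simp
  moreover have "g i0 \<le> A" using assms(1) i0 by simp
  ultimately show ?thesis by simp
next
  case False
  have "(\<Sum>i<l. g i) \<le> real (card {..<l}) * B"
  proof (rule sum_bounded_above)
    fix i assume "i \<in> {..<l}"
    then show "g i \<le> B" using False by (simp add: not_le less_imp_le)
  qed
  then show ?thesis using assms(4) by simp
qed

lemma card_filter_sum: assumes "finite A" shows "card {x\<in>A. P x} = (\<Sum>x\<in>A. if P x then 1 else (0::nat))"
proof -
  have "card {x\<in>A. P x} = (\<Sum>x\<in>{x\<in>A. P x}. (1::nat))" by simp
  also have "\<dots> = (\<Sum>x\<in>A. if P x then 1 else 0)" by (rule sum.inter_filter[OF assms])
  finally show ?thesis .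
qed

lemma nbr_sub: assumes "G \<subseteq> all_pairs n" shows "nbr G a \<subseteq> {..<n}"
proof
  fix x assume "x \<in> nbr G a"
  then have "{a, x} \<in> G" unfolding nbr_def by simp
  then have "{a, x} \<in> all_pairs n" using assms by blast
  then have "\<exists>u v. {a, x} = {u, v} \<and> u < v \<and> v < n" unfolding all_pairs_def by simp
  then obtain u v where uv: "{a, x} = {u, v}" "u < v" "v < n" by blast
  have "x \<in> {a, x}" by simp
  then have "x \<in> {u, v}" using uv(1) by simp
  then show "x \<in> {..<n}" using uv by auto
qed



lemma step:
  fixes \<delta> \<epsilon> :: real
  assumes l: "3 \<le> l" and \<delta>: "0 < \<delta>" and \<epsilon>: "0 < \<epsilon>" and l\<delta>: "real l * \<delta> < 1"
   and exp: "expansion n H b" and b: "1 \<le> b"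
   and G: "G \<subseteq> all_pairs n"
   and deg: "\<forall>a<n. (\<delta> + \<epsilon>) * real n \<le> real (card (nbr G a))"
   and s1: "real (2 * (l - 1) * b + l) \<le> \<epsilon> / 2 * real n"
   and s2: "real (2 * (l - 1) * b + l) \<le> \<epsilon> / (2 * \<delta> * real l) * (1 - real l * \<delta>) * real n"
   and s3: "real ((l - 1) * (l - 1) * b + l) \<le> (1 - real l * \<delta>) * real n"
   and f: "valid n (G \<union> H) l k f"
   and k: "real k < \<delta> * real n"
  shows "\<exists>f'. valid n (G \<union> H) l (Suc k) f'"
proof -
  define U where "U = (\<lambda>(j, i). f j i) ` ({..<k} \<times> {..<l})"
  define R where "R = {..<n} - U"
  define \<gamma> where "\<gamma> = 1 - real l * \<delta>"
  define \<eta> where "\<eta> = \<epsilon> / (2 * \<delta> * real l)"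
  have \<gamma>: "0 < \<gamma>" using l\<delta> \<gamma>_def by simp
  have lpos: "0 < real l" using l by simp
  have \<eta>: "0 < \<eta>" using \<eta>_def \<epsilon> \<delta> lpos by simp
  have inj: "inj_on (\<lambda>(j, i). f j i) ({..<k} \<times> {..<l})" using f valid_def by simp
  have injD: "j = j' \<and> i = i'" if "j < k" "i < l" "j' < k" "i' < l" "f j i = f j' i'" for j i j' i'
    using inj_onD[OF inj, of "(j, i)" "(j', i')"] that by simp
  have fn: "f j i < n" if "j < k" "i < l" for j i using f valid_def that by simp
  have fU: "f j i \<in> U" if "j < k" "i < l" for j i unfolding U_def using that by force
  have Usub: "U \<subseteq> {..<n}" unfolding U_def using fn by auto
  have finU: "finite U" using Usub finite_subset by blast
  have finR: "finite R" unfolding R_def by simp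
  have cU: "card U = k * l" unfolding U_def using card_image[OF inj] by (simp add: card_cartesian_product)
  have cR: "card R = n - k * l" unfolding R_def using card_Diff_subset[OF finU Usub] cU by simp
  have kl: "real (k * l) < real l * \<delta> * real n" using k lpos by simp
  moreover have "real l * \<delta> * real n \<le> real n" using l\<delta> by (simp add: mult_left_le_one_le \<delta> lpos less_imp_le)
  ultimately have kln: "k * l \<le> n" by linarith
  have gn: "\<gamma> * real n = real n - real l * \<delta> * real n" by (simp add: \<gamma>_def algebra_simps)
  have "real (card R) = real n - real (k * l)" using cR kln by (simp add: of_nat_diff)
  then have cRr: "\<gamma> * real n < real (card R)" using gn kl by linarith
  have Rn: "R \<subseteq> {..<n}" unfolding R_def by auto
  have UR: "x \<notin> R" if "x \<in> U" for x using that R_def by auto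
  have nsub: "nbr G a \<subseteq> {..<n}" for a by (rule nbr_sub[OF G])
  have notself: "a \<notin> nbr G a" for a unfolding nbr_def by simp
  have cyc: "\<forall>i<l. c i < n" if "c 0 = h" "h < n" "\<forall>i\<in>{1..<l}. c i \<in> W" "W \<subseteq> {..<n}" for c h W
  proof (intro allI impI)
    fix i assume "i < l"
    then show "c i < n" using that by (cases "i = 0") auto
  qed
  have n3: "real (2 * (l - 1) * b) \<le> real (2 * (l - 1) * b + l)" by simp
  show ?thesis
  proof (cases "\<exists>h\<in>R. \<epsilon> / 2 * real n \<le> real (card (nbr G h \<inter> R))")
    case True
    then obtain h where h: "h \<in> R" "\<epsilon> / 2 * real n \<le> real (card (nbr G h \<inter> R))" by blast
    define W where "W = R - {h}"
    have hn: "h < n" using h Rn by auto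
    have "nbr G h \<inter> W = nbr G h \<inter> R" unfolding W_def using notself by auto
    then have c1: "2 * (l - 1) * b \<le> card (nbr G h \<inter> W)" using h s1 n3
      by (metis of_nat_le_iff order_trans)
    have "real ((l - 1) * (l - 1) * b + l) < real (card R)" using s3 cRr \<gamma>_def by simp
    then have "(l - 1) * (l - 1) * b + l < card R" by linarith
    moreover have "card W = card R - 1" unfolding W_def using h finR by simp
    ultimately have c2: "(l - 1) * (l - 1) * b \<le> card W" by simp
    have WR: "W \<subseteq> R" "h \<notin> W" unfolding W_def by auto
    then have Wn: "W \<subseteq> {..<n}" using Rn by auto
    obtain c where c: "c 0 = h" "\<forall>i\<in>{1..<l}. c i \<in> W" "inj_on c {..<l}"
        "\<forall>i<l. {c i, c ((i + 1) mod l)} \<in> G \<union> H"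
      using cycle_lemma[OF l exp b Wn WR(2) hn c1 c2] by blast
    have cR: "c i \<in> R" if "i < l" for i
      using that c(1,2) WR h by (cases "i = 0") auto
    have "valid n (G \<union> H) l (Suc k) (f(k := c))"
    proof (rule valid_extend[OF f cyc[OF c(1) hn c(2) Wn] c(3) c(4)])
      show "\<forall>i<l. \<forall>j<k. \<forall>i'<l. c i \<noteq> f j i'" using cR fU UR by metis
    qed
    then show ?thesis by blast
  next
    case False
    then have small: "real (card (nbr G a \<inter> R)) < \<epsilon> / 2 * real n" if "a \<in> R" for a
      using that by force
    have Rne: "R \<noteq> {}" using cRr \<gamma> by (metis card.empty mult_nonneg_nonneg not_less of_nat_0 of_nat_0_le_iff less_imp_le)
    define d where "d u = real (card (nbr G u \<inter> R))" for u
    have dR: "0 \<le> d u \<and> d u \<le> real (card R)" for u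
      unfolding d_def using finR by (simp add: card_mono)
    have big: "\<exists>j<k. \<exists>i1<l. \<exists>i2<l. i1 \<noteq> i2 \<and> \<eta> * real (card R) \<le> d (f j i1) \<and> \<eta> * real (card R) \<le> d (f j i2)"
    proof (rule ccontr)
      assume no: "\<not> ?thesis"
      have bound: "(\<Sum>i<l. d (f j i)) \<le> real (card R) + real l * (\<eta> * real (card R))" if "j < k" for j
      proof (rule sum_one_big)
        show "\<forall>i<l. 0 \<le> d (f j i) \<and> d (f j i) \<le> real (card R)" using dR by simp
        show "\<forall>i1<l. \<forall>i2<l. \<eta> * real (card R) \<le> d (f j i1) \<and> \<eta> * real (card R) \<le> d (f j i2) \<longrightarrow> i1 = i2"
          using no that by blast
        show "0 \<le> \<eta> * real (card R)" using \<eta> by simp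
        show "0 \<le> real (card R)" by simp
      qed
      have lower: "(\<delta> + \<epsilon> / 2) * real n < real (card (nbr G a \<inter> U))" if "a \<in> R" for a
      proof -
        have an: "a < n" using that Rn by auto
        have "nbr G a \<subseteq> (nbr G a \<inter> R) \<union> (nbr G a \<inter> U)" using nsub[of a] R_def by auto
        then have "card (nbr G a) \<le> card ((nbr G a \<inter> R) \<union> (nbr G a \<inter> U))"
          using finR finU by (intro card_mono) auto
        also have "\<dots> \<le> card (nbr G a \<inter> R) + card (nbr G a \<inter> U)" by (rule card_Un_le)
        finally have "real (card (nbr G a)) \<le> real (card (nbr G a \<inter> R)) + real (card (nbr G a \<inter> U))"
          by linarith
        moreover have "(\<delta> + \<epsilon>) * real n \<le> real (card (nbr G a))" using deg an by blast
        moreover have "real (card (nbr G a \<inter> R)) < \<epsilon> / 2 * real n" using small[OF that] .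
        moreover have "(\<delta> + \<epsilon>) * real n = (\<delta> + \<epsilon> / 2) * real n + \<epsilon> / 2 * real n"
          by (simp add: algebra_simps)
        ultimately show ?thesis by linarith
      qed
      have dc: "(\<Sum>a\<in>R. card (nbr G a \<inter> U)) = (\<Sum>u\<in>U. card (nbr G u \<inter> R))"
      proof -
        have e1: "card (nbr G a \<inter> U) = (\<Sum>u\<in>U. if {a, u} \<in> G then 1 else 0)" if "a \<in> R" for a
        proof -
          have "nbr G a \<inter> U = {u\<in>U. {a, u} \<in> G}" using that UR unfolding nbr_def by auto
          then show ?thesis using card_filter_sum[OF finU] by simp
        qed
        have e2: "card (nbr G u \<inter> R) = (\<Sum>a\<in>R. if {a, u} \<in> G then 1 else 0)" if "u \<in> U" for u
        proof -
          have "nbr G u \<inter> R = {a\<in>R. {a, u} \<in> G}" using that UR unfolding nbr_def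
            by (auto simp: insert_commute)
          then show ?thesis using card_filter_sum[OF finR] by simp
        qed
        have "(\<Sum>a\<in>R. card (nbr G a \<inter> U)) = (\<Sum>a\<in>R. \<Sum>u\<in>U. if {a, u} \<in> G then 1 else (0::nat))"
          using e1 by (rule sum.cong[OF refl])
        also have "\<dots> = (\<Sum>u\<in>U. \<Sum>a\<in>R. if {a, u} \<in> G then 1 else (0::nat))" by (rule sum.swap)
        also have "\<dots> = (\<Sum>u\<in>U. card (nbr G u \<inter> R))" using e2 by (intro sum.cong refl) simp
        finally show ?thesis .
      qed
      have su: "(\<Sum>u\<in>U. d u) = (\<Sum>j<k. \<Sum>i<l. d (f j i))"
      proof -
        have "(\<Sum>u\<in>U. d u) = (\<Sum>x\<in>{..<k} \<times> {..<l}. d ((\<lambda>(j, i). f j i) x))"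
          unfolding U_def by (rule sum.reindex[OF inj, unfolded comp_def])
        also have "\<dots> = (\<Sum>(j, i)\<in>{..<k} \<times> {..<l}. d (f j i))" by (simp add: case_prod_beta)
        also have "\<dots> = (\<Sum>j<k. \<Sum>i<l. d (f j i))" by (rule sum.cartesian_product[symmetric])
        finally show ?thesis .
      qed
      have "(\<Sum>a\<in>R. (\<delta> + \<epsilon> / 2) * real n) < (\<Sum>a\<in>R. real (card (nbr G a \<inter> U)))"
        by (rule sum_strict_mono[OF finR Rne lower])
      also have "\<dots> = (\<Sum>u\<in>U. d u)"
        using dc unfolding d_def by (metis of_nat_sum)
      also have "\<dots> \<le> (\<Sum>j<k. real (card R) + real l * (\<eta> * real (card R)))"
        unfolding su by (rule sum_mono) (use bound in simp)
      also have "\<dots> = real k * (real (card R) * (1 + real l * \<eta>))" by (simp add: algebra_simps)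
      also have "\<dots> \<le> \<delta> * real n * (real (card R) * (1 + real l * \<eta>))"
        using k \<eta> by (intro mult_right_mono) auto
      also have "\<dots> = real (card R) * ((\<delta> + \<epsilon> / 2) * real n)"
        using \<delta> lpos unfolding \<eta>_def by (simp add: field_simps)
      finally show False by simp
    qed
    then obtain j i1 i2 where ji: "j < k" "i1 < l" "i2 < l" "i1 \<noteq> i2"
      "\<eta> * real (card R) \<le> d (f j i1)" "\<eta> * real (card R) \<le> d (f j i2)" by blast
    define h1 where "h1 = f j i1"
    define h2 where "h2 = f j i2"
    have h12: "h1 \<noteq> h2" using injD ji unfolding h1_def h2_def by blast
    have h1R: "h1 \<notin> R" "h1 < n" using fU fn ji UR unfolding h1_def by auto
    have h2R: "h2 \<notin> R" "h2 < n" using fU fn ji UR unfolding h2_def by auto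
    have "\<eta> * (\<gamma> * real n) \<le> \<eta> * real (card R)" using cRr \<eta> by simp
    then have dbig: "real (2 * (l - 1) * b + l) \<le> d h1" "real (2 * (l - 1) * b + l) \<le> d h2"
      using s2 ji unfolding h1_def h2_def \<eta>_def \<gamma>_def by (simp_all add: mult.assoc)
    have Rbig: "(l - 1) * (l - 1) * b + l < card R"
    proof -
      have "real ((l - 1) * (l - 1) * b + l) < real (card R)" using s3 cRr \<gamma>_def by simp
      then show ?thesis by linarith
    qed
    have c11: "2 * (l - 1) * b \<le> card (nbr G h1 \<inter> R)" using dbig(1) unfolding d_def by linarith
    have c12: "(l - 1) * (l - 1) * b \<le> card R" using Rbig by simp
    obtain c1 where c1: "c1 0 = h1" "\<forall>i\<in>{1..<l}. c1 i \<in> R" "inj_on c1 {..<l}"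
        "\<forall>i<l. {c1 i, c1 ((i + 1) mod l)} \<in> G \<union> H"
      using cycle_lemma[OF l exp b Rn h1R(1) h1R(2) c11 c12] by blast
    define W2 where "W2 = R - c1 ` {1..<l}"
    have cim: "card (c1 ` {1..<l}) \<le> l" using card_image_le[of "{1..<l}" c1] by simp
    have W2R: "W2 \<subseteq> R" "h2 \<notin> W2" unfolding W2_def using h2R by auto
    have W2n: "W2 \<subseteq> {..<n}" using W2R Rn by auto
    have "nbr G h2 \<inter> R \<subseteq> (nbr G h2 \<inter> W2) \<union> c1 ` {1..<l}" unfolding W2_def by auto
    then have "card (nbr G h2 \<inter> R) \<le> card ((nbr G h2 \<inter> W2) \<union> c1 ` {1..<l})"
      using finR unfolding W2_def by (intro card_mono) auto
    also have "\<dots> \<le> card (nbr G h2 \<inter> W2) + card (c1 ` {1..<l})" by (rule card_Un_le)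
    finally have c21: "2 * (l - 1) * b \<le> card (nbr G h2 \<inter> W2)"
      using dbig(2) cim unfolding d_def by linarith
    have "R \<subseteq> W2 \<union> c1 ` {1..<l}" unfolding W2_def by auto
    then have "card R \<le> card (W2 \<union> c1 ` {1..<l})" using finR unfolding W2_def by (intro card_mono) auto
    also have "\<dots> \<le> card W2 + card (c1 ` {1..<l})" by (rule card_Un_le)
    finally have c22: "(l - 1) * (l - 1) * b \<le> card W2" using Rbig cim by linarith
    obtain c2 where c2: "c2 0 = h2" "\<forall>i\<in>{1..<l}. c2 i \<in> W2" "inj_on c2 {..<l}"
        "\<forall>i<l. {c2 i, c2 ((i + 1) mod l)} \<in> G \<union> H"
      using cycle_lemma[OF l exp b W2n W2R(2) h2R(2) c21 c22] by blast
    have c1R: "c1 i \<in> R" if "i < l" "i \<noteq> 0" for i using c1(2) that by simp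
    have c2W: "c2 i \<in> W2" if "i < l" "i \<noteq> 0" for i using c2(2) that by simp
    have v1: "valid n (G \<union> H) l k (f(j := c1))"
    proof (rule valid_replace[OF f ji(1) cyc[OF c1(1) h1R(2) c1(2) Rn] c1(3) c1(4)])
      show "\<forall>i<l. \<forall>j'<k. j' \<noteq> j \<longrightarrow> (\<forall>i'<l. c1 i \<noteq> f j' i')"
      proof (intro allI impI)
        fix i j' i' assume a: "i < l" "j' < k" "j' \<noteq> j" "i' < l"
        show "c1 i \<noteq> f j' i'"
        proof (cases "i = 0")
          case True
          then show ?thesis using c1(1) injD[of j i1 j' i'] a ji unfolding h1_def by auto
        next
          case False
          have "c1 i \<in> R" "f j' i' \<in> U" using c1R[OF a(1) False] fU[OF a(2) a(4)] by auto
          then show ?thesis using UR by metis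
        qed
      qed
    qed
    have "valid n (G \<union> H) l (Suc k) ((f(j := c1))(k := c2))"
    proof (rule valid_extend[OF v1 cyc[OF c2(1) h2R(2) c2(2) W2n] c2(3) c2(4)])
      show "\<forall>i<l. \<forall>j'<k. \<forall>i'<l. c2 i \<noteq> (f(j := c1)) j' i'"
      proof (intro allI impI)
        fix i j' i' assume a: "i < l" "j' < k" "i' < l"
        show "c2 i \<noteq> (f(j := c1)) j' i'"
        proof (cases "j' = j")
          case True
          show ?thesis
          proof (cases "i = 0"; cases "i' = 0")
            assume "i = 0" "i' = 0" then show ?thesis using True c1(1) c2(1) h12 by simp
          next
            assume "i = 0" "i' \<noteq> 0" then show ?thesis using True c2(1) c1R[OF a(3)] h2R by auto
          next
            assume "i \<noteq> 0" "i' = 0" then show ?thesis using True c1(1) c2W[OF a(1)] W2R h1R by auto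
          next
            assume "i \<noteq> 0" "i' \<noteq> 0"
            then show ?thesis using True c2W[OF a(1)] a(3) unfolding W2_def by auto
          qed
        next
          case False
          show ?thesis
          proof (cases "i = 0")
            case True
            then show ?thesis using c2(1) injD[of j i2 j' i'] a ji False unfolding h2_def by auto
          next
            case F2: False
            then show ?thesis using c2W[OF a(1) F2] W2R fU[OF a(2) a(3)] UR False by auto
          qed
        qed
      qed
    qed
    then show ?thesis by blast
  qed
qed



lemma deterministic:
  fixes \<delta> \<epsilon> :: real
  assumes l: "3 \<le> l" and \<delta>: "0 < \<delta>" and \<epsilon>: "0 < \<epsilon>" and l\<delta>: "real l * \<delta> < 1"
   and exp: "expansion n H b" and b: "1 \<le> b"
   and G: "G \<subseteq> all_pairs n"
   and deg: "\<forall>a<n. (\<delta> + \<epsilon>) * real n \<le> real (card (nbr G a))"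
   and s1: "real (2 * (l - 1) * b + l) \<le> \<epsilon> / 2 * real n"
   and s2: "real (2 * (l - 1) * b + l) \<le> \<epsilon> / (2 * \<delta> * real l) * (1 - real l * \<delta>) * real n"
   and s3: "real ((l - 1) * (l - 1) * b + l) \<le> (1 - real l * \<delta>) * real n"
  shows "\<exists>k. \<delta> * real n \<le> real k \<and> has_disjoint_cycles n (G \<union> H) l k"
proof -
  have all: "real m < \<delta> * real n + 1 \<Longrightarrow> \<exists>f. valid n (G \<union> H) l m f" for m
  proof (induction m)
    case 0
    then show ?case by (auto simp: valid_def)
  next
    case (Suc m)
    then have "real m < \<delta> * real n" by simp
    moreover obtain f where "valid n (G \<union> H) l m f" using Suc by force
    ultimately show ?case using step[OF l \<delta> \<epsilon> l\<delta> exp b G deg s1 s2 s3] by blast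
  qed
  define m where "m = nat \<lceil>\<delta> * real n\<rceil>"
  have "\<delta> * real n \<le> real m" unfolding m_def by linarith
  moreover have "real m < \<delta> * real n + 1" unfolding m_def
    using \<delta> by (simp add: of_nat_nat) linarith
  ultimately show ?thesis using all hdc_valid by blast
qed



lemma exp_bound:
  fixes p \<beta> C :: real and n b :: nat
  assumes p: "0 \<le> p" "p \<le> 1" and n: "0 < n" and pC: "C / real n \<le> p" and C: "C * \<beta>^2 = 4"
    and bb: "\<beta> * real n \<le> real b" and \<beta>: "0 \<le> \<beta>" and Cpos: "0 \<le> C"
  shows "4 ^ n * (1 - p) ^ (b * b) \<le> (4 * exp (-4)) ^ n"
proof -
  have "(1 - p) ^ (b * b) \<le> exp (-p) ^ (b * b)"
    using p by (intro power_mono) (auto simp: exp_ge_add_one_self[of "-p", simplified add.commute] 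
        intro: order_trans[OF _ exp_ge_add_one_self])
  also have "\<dots> = exp (real (b * b) * (-p))" by (rule exp_of_nat_mult[symmetric])
  also have "\<dots> \<le> exp (real n * (-4))"
  proof -
    have "(\<beta> * real n)^2 \<le> (real b)^2" using bb \<beta> by (intro power_mono) auto
    then have b2: "\<beta>^2 * (real n)^2 \<le> real (b * b)" by (simp add: power_mult_distrib power2_eq_square mult_ac)
    have "real n * 4 = C / real n * (\<beta>^2 * (real n)^2)" using n C by (simp add: field_simps power2_eq_square)
    also have "\<dots> \<le> p * real (b * b)"
      using pC b2 Cpos n p by (intro mult_mono) auto
    finally show ?thesis by (simp add: mult_ac)
  qed
  also have "\<dots> = exp (-4) ^ n" by (rule exp_of_nat_mult)
  finally have "(1 - p) ^ (b * b) \<le> exp (-4) ^ n" .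
  then have "4 ^ n * (1 - p) ^ (b * b) \<le> 4 ^ n * exp (-4) ^ n" by (intro mult_left_mono) auto
  then show ?thesis by (simp add: power_mult_distrib)
qed

lemma lim_lower: "(\<lambda>n. 1 - (4 * exp (-4::real)) ^ n) \<longlonglongrightarrow> 1"
proof -
  have "(5::real) \<le> exp 4" using exp_ge_add_one_self[of 4] by simp
  then have "4 * exp (-4::real) < 1" by (simp add: exp_minus field_simps)
  then have "(\<lambda>n. (4 * exp (-4::real)) ^ n) \<longlonglongrightarrow> 0" by (intro LIMSEQ_realpow_zero) auto
  then show ?thesis using tendsto_diff[OF tendsto_const[of "1::real"]] by fastforce
qed

lemma gnp_le1: "0 \<le> p \<Longrightarrow> p \<le> 1 \<Longrightarrow> gnp_prob n p P \<le> 1"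
  using gnp_mono[of p "P" "\<lambda>_. True" n] gnp_total[of n p] by simp

lemma mindeg:
  assumes "a < n" shows "min_degree n E \<le> card (nbr E a)"
  unfolding min_degree_def degree_nbr[symmetric] using assms by (intro Min_le) auto

theorem corollary1p7:
  fixes l :: nat and \<epsilon> \<delta> :: real
  assumes "l \<ge> 3" and "\<epsilon> > 0" and "0 < \<delta>" and "\<delta> < 1 / real l"
  shows "\<exists>C>0. \<forall>(Gs :: nat \<Rightarrow> nat set set) (ps :: nat \<Rightarrow> real).
           (\<forall>n. Gs n \<subseteq> all_pairs n) \<and>
           (\<forall>\<^sub>F n in sequentially. real (min_degree n (Gs n)) \<ge> (\<delta> + \<epsilon>) * real n) \<and>
           (\<forall>n. 0 \<le> ps n \<and> ps n \<le> 1) \<and>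
           (\<forall>\<^sub>F n in sequentially. ps n \<ge> C / real n)
           \<longrightarrow> (\<lambda>n. gnp_prob n (ps n)
                   (\<lambda>H. \<exists>k. real k \<ge> \<delta> * real n \<and> has_disjoint_cycles n (Gs n \<union> H) l k))
               \<longlonglongrightarrow> 1"
proof -
  note l = assms(1) and \<epsilon> = assms(2) and \<delta> = assms(3)
  have lpos: "0 < real l" using l by simp
  have l\<delta>: "real l * \<delta> < 1" using assms(4) lpos by (simp add: field_simps)
  define L where "L = l - 1"
  have L2: "2 \<le> L" using l L_def by simp
  have rL: "real L = real l - 1" using l L_def by (simp add: of_nat_diff)
  define \<gamma> where "\<gamma> = 1 - real l * \<delta>"
  define \<eta> where "\<eta> = \<epsilon> / (2 * \<delta> * real l)"
  define \<mu> where "\<mu> = min (min (\<epsilon> / 2) (\<eta> * \<gamma>)) \<gamma>"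
  define \<beta> where "\<beta> = \<mu> / (4 * (real L)^2)"
  define C where "C = 4 / \<beta>^2"
  have \<gamma>: "0 < \<gamma>" using l\<delta> \<gamma>_def by simp
  have \<eta>: "0 < \<eta>" using \<eta>_def \<epsilon> \<delta> lpos by simp
  have \<mu>: "0 < \<mu>" "\<mu> \<le> \<epsilon> / 2" "\<mu> \<le> \<eta> * \<gamma>" "\<mu> \<le> \<gamma>" using \<gamma> \<eta> \<epsilon> \<mu>_def by auto
  have Lr: "1 \<le> real L" using L2 by simp
  have \<beta>: "0 < \<beta>" using \<mu> Lr \<beta>_def by simp
  have C: "0 < C" "C * \<beta>^2 = 4" using \<beta> C_def by auto
  have L\<beta>1: "2 * real L * \<beta> \<le> \<mu> / 2"
  proof -
    have "2 * real L * \<beta> = \<mu> / (2 * real L)" using Lr unfolding \<beta>_def by (simp add: field_simps power2_eq_square)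
    also have "\<dots> \<le> \<mu> / 2" using Lr \<mu> by (intro divide_left_mono) auto
    finally show ?thesis .
  qed
  have L\<beta>2: "real L * real L * \<beta> = \<mu> / 4" using Lr unfolding \<beta>_def by (simp add: field_simps power2_eq_square)
  show ?thesis
  proof (intro exI[of _ C] conjI allI impI)
    show "0 < C" by (rule C(1))
  next
    fix Gs :: "nat \<Rightarrow> nat set set" and ps :: "nat \<Rightarrow> real"
    assume hyp: "(\<forall>n. Gs n \<subseteq> all_pairs n) \<and>
           (\<forall>\<^sub>F n in sequentially. real (min_degree n (Gs n)) \<ge> (\<delta> + \<epsilon>) * real n) \<and>
           (\<forall>n. 0 \<le> ps n \<and> ps n \<le> 1) \<and>
           (\<forall>\<^sub>F n in sequentially. ps n \<ge> C / real n)"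
    then have Gs: "\<And>n. Gs n \<subseteq> all_pairs n" and ps: "\<And>n. 0 \<le> ps n" "\<And>n. ps n \<le> 1"
      and ev1: "\<forall>\<^sub>F n in sequentially. real (min_degree n (Gs n)) \<ge> (\<delta> + \<epsilon>) * real n"
      and ev2: "\<forall>\<^sub>F n in sequentially. ps n \<ge> C / real n" by auto
    define b where "b n = nat \<lfloor>\<beta> * real n\<rfloor> + 1" for n
    obtain N :: nat where N: "2 * (real L * real L + 2 * real L + real l) / \<mu> \<le> real N"
      using real_arch_simple by blast
    have ev3: "\<forall>\<^sub>F n in sequentially. N + 1 \<le> n" by (rule eventually_ge_at_top)
    let ?good = "\<lambda>n H. \<exists>k. real k \<ge> \<delta> * real n \<and> has_disjoint_cycles n (Gs n \<union> H) l k"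
    have low: "\<forall>\<^sub>F n in sequentially. 1 - (4 * exp (-4)) ^ n \<le> gnp_prob n (ps n) (?good n)"
      using ev1 ev2 ev3
    proof eventually_elim
      case (elim n)
      have n: "0 < n" using elim(3) by simp
      have nN: "real N \<le> real n" using elim(3) by simp
      have bn: "\<beta> * real n < real (b n)" "real (b n) \<le> \<beta> * real n + 1" "1 \<le> b n"
      proof -
        have "0 \<le> \<beta> * real n" using \<beta> by simp
        then show "\<beta> * real n < real (b n)" "real (b n) \<le> \<beta> * real n + 1"
          unfolding b_def by linarith+
        show "1 \<le> b n" unfolding b_def by simp
      qed
      have "2 * (real L * real L + 2 * real L + real l) \<le> \<mu> * real N"
        using N \<mu> by (simp add: field_simps)
      moreover have "\<mu> * real N \<le> \<mu> * real n" using nN \<mu> by (intro mult_left_mono) auto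
      ultimately have "2 * (real L * real L + 2 * real L + real l) \<le> \<mu> * real n" by (rule order_trans)
      then have \<mu>n: "real L * real L + 2 * real L + real l \<le> \<mu> * real n / 2" by simp
      have A: "real (2 * (l - 1) * b n + l) \<le> \<mu> * real n"
      proof -
        have "real (2 * (l - 1) * b n + l) = 2 * real L * real (b n) + real l" using L_def by simp
        also have "\<dots> \<le> 2 * real L * (\<beta> * real n + 1) + real l"
          using bn Lr by (intro add_right_mono mult_left_mono) auto
        also have "\<dots> = (2 * real L * \<beta>) * real n + 2 * real L + real l" by (simp add: algebra_simps)
        also have "\<dots> \<le> \<mu> / 2 * real n + 2 * real L + real l"
          using L\<beta>1 by (intro add_right_mono mult_right_mono) auto
        finally have X: "real (2 * (l - 1) * b n + l) \<le> \<mu> / 2 * real n + 2 * real L + real l" .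
        have "real L * real L + 2 * real L + real l \<le> \<mu> / 2 * real n" using \<mu>n by simp
        moreover have "0 \<le> real L * real L" by simp
        moreover have "\<mu> / 2 * real n + \<mu> / 2 * real n = \<mu> * real n" by simp
        ultimately show ?thesis using X by linarith
      qed
      have s1: "real (2 * (l - 1) * b n + l) \<le> \<epsilon> / 2 * real n"
        using A \<mu> by (meson mult_right_mono of_nat_0_le_iff order_trans)
      have s2: "real (2 * (l - 1) * b n + l) \<le> \<epsilon> / (2 * \<delta> * real l) * (1 - real l * \<delta>) * real n"
        using A \<mu> unfolding \<eta>_def[symmetric] \<gamma>_def[symmetric] by (meson mult_right_mono of_nat_0_le_iff order_trans)
      have s3: "real ((l - 1) * (l - 1) * b n + l) \<le> (1 - real l * \<delta>) * real n"
      proof -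
        have "real ((l - 1) * (l - 1) * b n + l) = real L * real L * real (b n) + real l" using L_def by simp
        also have "\<dots> \<le> real L * real L * (\<beta> * real n + 1) + real l"
          using bn Lr by (intro add_right_mono mult_left_mono) auto
        also have "\<dots> = (real L * real L * \<beta>) * real n + real L * real L + real l" by (simp add: algebra_simps)
        also have "\<dots> = \<mu> / 4 * real n + real L * real L + real l" using L\<beta>2 by simp
        also have "\<dots> \<le> \<mu> * real n"
        proof -
          have "real L * real L + real l \<le> \<mu> / 2 * real n" using \<mu>n Lr by simp
          moreover have "0 \<le> \<mu> / 4 * real n" using \<mu> by simp
          moreover have "\<mu> / 4 * real n + \<mu> / 2 * real n \<le> \<mu> * real n" using \<mu> by (simp add: field_simps)
          ultimately show ?thesis by linarith
        qed
        also have "\<dots> \<le> \<gamma> * real n" using \<mu> by (intro mult_right_mono) auto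
        finally show ?thesis unfolding \<gamma>_def .
      qed
      have deg: "\<forall>a<n. (\<delta> + \<epsilon>) * real n \<le> real (card (nbr (Gs n) a))"
      proof (intro allI impI)
        fix a assume "a < n"
        then have "min_degree n (Gs n) \<le> card (nbr (Gs n) a)" by (rule mindeg)
        then show "(\<delta> + \<epsilon>) * real n \<le> real (card (nbr (Gs n) a))" using elim(1) by linarith
      qed
      have det: "?good n H" if "expansion n H (b n)" for H
        using deterministic[OF l \<delta> \<epsilon> l\<delta> that bn(3) Gs deg s1 s2 s3] by simp
      have "gnp_prob n (ps n) (\<lambda>H. expansion n H (b n)) \<le> gnp_prob n (ps n) (?good n)"
        using det ps by (intro gnp_mono) auto
      moreover have "gnp_prob n (ps n) (\<lambda>H. expansion n H (b n)) + gnp_prob n (ps n) (\<lambda>H. \<not> expansion n H (b n)) = 1"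
        by (rule gnp_compl)
      moreover have "gnp_prob n (ps n) (\<lambda>H. \<not> expansion n H (b n)) \<le> 4 ^ n * (1 - ps n) ^ (b n * b n)"
        using not_expansion_prob ps by blast
      moreover have "4 ^ n * (1 - ps n) ^ (b n * b n) \<le> (4 * exp (-4)) ^ n"
        using exp_bound[OF ps(1) ps(2) n elim(2) C(2) _ _ ] bn \<beta> C(1) by simp
      ultimately show ?case by linarith
    qed
    have up: "\<forall>\<^sub>F n in sequentially. gnp_prob n (ps n) (?good n) \<le> 1"
      using gnp_le1 ps by (intro always_eventually) blast
    show "(\<lambda>n. gnp_prob n (ps n) (?good n)) \<longlonglongrightarrow> 1"
      by (rule tendsto_sandwich[OF low up lim_lower tendsto_const])
  qed
qed

end
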